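(* Let $X,Y$ be compact topological spaces, $c\in C(X\times Y)$, fix $x_0\in X$, and for each $k>0$ let $\mu^{(k)}\in\mathcal{P}(X)$, $\nu^{(k)}\in\mathcal{P}(Y)$. Then the union $\bigcup_{k>0}S^{(k)}(C(X))$ is relatively compact in $C(X)/\mathbb{R}$; that is, the set $\{w-w(x_0):\ w\in S^{(k)}(C(X))\text{ for some }k>0\}$ is relatively compact in $C(X)$ with the sup-norm.
   Context: For $k>0$, $u\in C(X)$, $v\in C(Y)$: $v^{(k)}[u](y)=k^{-1}\log\int_Xe^{-kc(x,y)-ku(x)}d\mu^{(k)}(x)$, $u^{(k)}[v](x)=k^{-1}\log\int_Ye^{-kc(x,y)-kv(y)}d\nu^{(k)}(y)$, and $S^{(k)}(u)=u^{(k)}[v^{(k)}[u]]$. *)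

theory Defs
  imports "HOL-Probability.Probability"
begin

definition v_k :: "real \<Rightarrow> ('a \<Rightarrow> 'b \<Rightarrow> real) \<Rightarrow> 'a measure \<Rightarrow> ('a \<Rightarrow> real) \<Rightarrow> 'b \<Rightarrow> real" where
  "v_k k c \<mu> u y = (1 / k) * ln (\<integral>x. exp (- k * c x y - k * u x) \<partial>\<mu>)"

definition u_k :: "real \<Rightarrow> ('a \<Rightarrow> 'b \<Rightarrow> real) \<Rightarrow> 'b measure \<Rightarrow> ('b \<Rightarrow> real) \<Rightarrow> 'a \<Rightarrow> real" where
  "u_k k c \<nu> v x = (1 / k) * ln (\<integral>y. exp (- k * c x y - k * v y) \<partial>\<nu>)"

definition S_k :: "real \<Rightarrow> ('a \<Rightarrow> 'b \<Rightarrow> real) \<Rightarrow> 'a measure \<Rightarrow> 'b measure \<Rightarrow> ('a \<Rightarrow> real) \<Rightarrow> 'a \<Rightarrow> real" where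
  "S_k k c \<mu> \<nu> u = u_k k c \<nu> (v_k k c \<mu> u)"

end

theory Submission
  imports Defs
begin


lemma bcf_mcomplete: "Metric_space.mcomplete (UNIV :: ('a::topological_space \<Rightarrow>\<^sub>C real) set) dist"
  unfolding Met_TC.mcomplete_def MCauchy_iff_Cauchy limitin_iff_tendsto
proof (intro allI impI)
  fix f :: "nat \<Rightarrow> ('a \<Rightarrow>\<^sub>C real)" assume "Cauchy f"
  then obtain g where "uniform_limit UNIV f g sequentially"
    using uniformly_convergent_eq_cauchy[of "\<lambda>_. True" f]
    unfolding Cauchy_def uniform_limit_sequentially_iff
    by (metis dist_fun_lt_imp_dist_val_lt)
  from uniform_limit_bcontfunE[OF this sequentially_bot]
  obtain l' where "g = apply_bcontfun l'" "(f \<longlonglongrightarrow> l')" by metis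
  then show "\<exists>l. f \<longlonglongrightarrow> l" by blast
qed

lemma key:
  fixes c :: "'a \<Rightarrow> 'b::topological_space \<Rightarrow> real" and \<nu> :: "'b measure"
  assumes k: "k > 0" and P: "prob_space \<nu>" and sets: "sets \<nu> = sets (borel :: 'b measure)"
    and cx: "\<And>x. continuous_on UNIV (c x)"
    and close: "\<And>y. \<bar>c x y - c x' y\<bar> \<le> \<epsilon>"
  shows "u_k k c \<nu> v x \<le> \<epsilon> + u_k k c \<nu> v x'"
proof -
  define g where "g x y = exp (- k * c x y - k * v y)" for x y
  have meas: "(\<lambda>y. exp (k * (c x y - c x' y))) \<in> borel_measurable \<nu>" for x x'
    unfolding measurable_cong_sets[OF sets refl]
    by (intro borel_measurable_continuous_onI continuous_intros cx)
  have gx: "g x y = g x' y * exp (k * (c x' y - c x y))" for x x' y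
    unfolding g_def by (simp add: exp_add[symmetric] algebra_simps)
  have gpos: "g x y > 0" for x y unfolding g_def by simp
  have dom: "g x y \<le> exp (k * \<epsilon>) * g x' y" for y
  proof -
    have "k * (c x' y - c x y) \<le> k * \<epsilon>" using close[of y] k
      by (intro mult_left_mono) auto
    then have "exp (k * (c x' y - c x y)) \<le> exp (k * \<epsilon>)" by simp
    then show ?thesis using gx[of x y x'] gpos[of x' y]
      by (simp add: mult.commute mult_left_mono)
  qed
  have dom': "g x' y \<le> exp (k * \<epsilon>) * g x y" for y
  proof -
    have "k * (c x y - c x' y) \<le> k * \<epsilon>" using close[of y] k
      by (intro mult_left_mono) auto
    then have "exp (k * (c x y - c x' y)) \<le> exp (k * \<epsilon>)" by simp
    then show ?thesis using gx[of x' y x] gpos[of x y]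
      by (simp add: mult.commute mult_left_mono)
  qed
  have intpos: "integral\<^sup>L \<nu> (g z) > 0" if "integrable \<nu> (g z)" for z
  proof -
    have ne: "integral\<^sup>L \<nu> (g z) \<noteq> 0"
    proof
      assume "integral\<^sup>L \<nu> (g z) = 0"
      then have "AE y in \<nu>. g z y = 0"
        using integral_nonneg_eq_0_iff_AE[OF that] gpos by (simp add: less_imp_le)
      then have "AE y in \<nu>. False" by eventually_elim (metis gpos less_irrefl)
      then show False using prob_space.AE_False[OF P] by simp
    qed
    have "integral\<^sup>L \<nu> (g z) \<ge> 0" by (intro integral_nonneg_AE AE_I2 less_imp_le gpos)
    with ne show ?thesis by simp
  qed
  show ?thesis
  proof (cases "integrable \<nu> (g x')")
    case True
    have ix: "integrable \<nu> (g x)"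
    proof (rule Bochner_Integration.integrable_bound)
      show "integrable \<nu> (\<lambda>y. exp (k * \<epsilon>) * g x' y)" using True by simp
      show "g x \<in> borel_measurable \<nu>"
      proof -
        have eq: "g x = (\<lambda>y. g x' y * exp (k * (c x' y - c x y)))" using gx by (intro ext)
        show ?thesis unfolding eq by (intro borel_measurable_times borel_measurable_integrable[OF True] meas)
      qed
      show "AE y in \<nu>. norm (g x y) \<le> norm (exp (k * \<epsilon>) * g x' y)"
        using dom gpos by (intro AE_I2) (simp add: less_imp_le)
    qed
    have "integral\<^sup>L \<nu> (g x) \<le> integral\<^sup>L \<nu> (\<lambda>y. exp (k * \<epsilon>) * g x' y)"
      by (intro integral_mono ix dom) (use True in simp)
    also have "\<dots> = exp (k * \<epsilon>) * integral\<^sup>L \<nu> (g x')" by simp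
    finally have "ln (integral\<^sup>L \<nu> (g x)) \<le> ln (exp (k * \<epsilon>) * integral\<^sup>L \<nu> (g x'))"
      using intpos[OF ix] by simp
    also have "\<dots> = k * \<epsilon> + ln (integral\<^sup>L \<nu> (g x'))"
      using intpos[OF True] by (simp add: ln_mult)
    finally have "(1/k) * ln (integral\<^sup>L \<nu> (g x)) \<le> (1/k) * (k * \<epsilon> + ln (integral\<^sup>L \<nu> (g x')))"
      using k by (intro mult_left_mono) auto
    then show ?thesis using k unfolding u_k_def g_def by (simp add: algebra_simps)
  next
    case False
    have ix: "\<not> integrable \<nu> (g x)"
    proof
      assume I: "integrable \<nu> (g x)"
      have "integrable \<nu> (g x')"
      proof (rule Bochner_Integration.integrable_bound)
        show "integrable \<nu> (\<lambda>y. exp (k * \<epsilon>) * g x y)" using I by simp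
        show "g x' \<in> borel_measurable \<nu>"
        proof -
          have eq: "g x' = (\<lambda>y. g x y * exp (k * (c x y - c x' y)))" using gx by (intro ext)
          show ?thesis unfolding eq by (intro borel_measurable_times borel_measurable_integrable[OF I] meas)
        qed
        show "AE y in \<nu>. norm (g x' y) \<le> norm (exp (k * \<epsilon>) * g x y)"
          using dom' gpos by (intro AE_I2) (simp add: less_imp_le)
      qed
      with False show False by simp
    qed
    have "\<epsilon> \<ge> 0" using close[of undefined] by simp
    then show ?thesis using not_integrable_integral_eq[OF ix] not_integrable_integral_eq[OF False]
      unfolding u_k_def g_def by simp
  qed
qed

lemma tube:
  fixes c :: "'a::topological_space \<Rightarrow> 'b::topological_space \<Rightarrow> real"
  assumes cpt: "compact (UNIV :: 'b set)"
    and cont: "continuous_on UNIV (\<lambda>p. c (fst p) (snd p))"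
    and e: "\<epsilon> > 0"
  shows "\<exists>U. open U \<and> x \<in> U \<and> (\<forall>x'\<in>U. \<forall>y. \<bar>c x' y - c x y\<bar> \<le> \<epsilon>)"
proof -
  define W where "W y = (\<lambda>p. c (fst p) (snd p)) -` {c x y - \<epsilon>/2 <..< c x y + \<epsilon>/2}" for y
  have "open (W y)" for y
    unfolding W_def by (rule open_vimage[OF open_greaterThanLessThan cont])
  moreover have "(x, y) \<in> W y" for y using e by (simp add: W_def)
  ultimately have ex: "\<exists>AB. open (fst AB) \<and> open (snd AB) \<and> (x, y) \<in> fst AB \<times> snd AB \<and> fst AB \<times> snd AB \<subseteq> W y" for y
  proof -
    obtain A B where "open A" "open B" "(x,y) \<in> A \<times> B" "A \<times> B \<subseteq> W y"
      using open_prod_elim[OF \<open>open (W y)\<close> \<open>(x, y) \<in> W y\<close>] by blast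
    then show ?thesis by (intro exI[of _ "(A, B)"]) simp
  qed
  define A where "A y = fst (SOME AB. open (fst AB) \<and> open (snd AB) \<and> (x, y) \<in> fst AB \<times> snd AB \<and> fst AB \<times> snd AB \<subseteq> W y)" for y
  define B where "B y = snd (SOME AB. open (fst AB) \<and> open (snd AB) \<and> (x, y) \<in> fst AB \<times> snd AB \<and> fst AB \<times> snd AB \<subseteq> W y)" for y
  have AB: "open (A y) \<and> open (B y) \<and> (x, y) \<in> A y \<times> B y \<and> A y \<times> B y \<subseteq> W y" for y
    unfolding A_def B_def by (rule someI_ex[OF ex])
  obtain T where T: "finite T" "UNIV \<subseteq> (\<Union>t\<in>T. B t)"
  proof (rule compactE_image[OF cpt, where C=UNIV and f=B])
    show "open (B t)" for t using AB by blast
    show "UNIV \<subseteq> (\<Union>c\<in>UNIV. B c)" using AB by blast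
  qed auto
  show ?thesis
  proof (intro exI conjI ballI allI)
    show "open (\<Inter>t\<in>T. A t)" using T(1) AB by (intro open_INT) auto
    show "x \<in> (\<Inter>t\<in>T. A t)" using AB by auto
    fix x' y assume x': "x' \<in> (\<Inter>t\<in>T. A t)"
    obtain t where t: "t \<in> T" "y \<in> B t" using T(2) by blast
    have "(x', y) \<in> W t" "(x, y) \<in> W t" using AB[of t] t x' by auto
    then show "\<bar>c x' y - c x y\<bar> \<le> \<epsilon>" by (auto simp: W_def)
  qed
qed

lemma tb:
  fixes A :: "('a::topological_space \<Rightarrow>\<^sub>C real) set"
  assumes cpt: "compact (UNIV::'a set)"
    and bd: "\<And>f x. f \<in> A \<Longrightarrow> \<bar>f x\<bar> \<le> B"
    and equi: "\<And>x \<epsilon>. \<epsilon> > 0 \<Longrightarrow> \<exists>U. open U \<and> x \<in> U \<and> (\<forall>f\<in>A. \<forall>x'\<in>U. \<bar>f x' - f x\<bar> \<le> \<epsilon>)"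
  shows "Met_TC.mtotally_bounded A"
  unfolding Met_TC.mtotally_bounded_def
proof (intro allI impI)
  fix e :: real assume "e > 0"
  define \<epsilon> where "\<epsilon> = e / 4"
  have ep: "\<epsilon> > 0" using \<open>e>0\<close> by (simp add: \<epsilon>_def)
  obtain U where U: "\<And>x. open (U x) \<and> x \<in> U x \<and> (\<forall>f\<in>A. \<forall>x'\<in>U x. \<bar>f x' - f x\<bar> \<le> \<epsilon>)"
    using equi[OF ep] by metis
  obtain T where T: "finite T" "UNIV \<subseteq> (\<Union>t\<in>T. U t)"
  proof (rule compactE_image[OF cpt, where C=UNIV and f=U])
    show "open (U t)" for t using U by blast
    show "UNIV \<subseteq> (\<Union>c\<in>UNIV. U c)" using U by blast
  qed auto
  define pat where "pat f = restrict (\<lambda>x. round (f x / \<epsilon>)) T" for f :: "'a \<Rightarrow>\<^sub>C real"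
  define N where "N = ceiling (B / \<epsilon>) + 1"
  have "pat ` A \<subseteq> PiE T (\<lambda>_. {-N..N})"
  proof
    fix p assume "p \<in> pat ` A"
    then obtain f where f: "f \<in> A" "p = pat f" by blast
    have "round (f t / \<epsilon>) \<in> {-N..N}" for t
    proof -
      have "\<bar>f t / \<epsilon>\<bar> = \<bar>f t\<bar> / \<epsilon>" using ep by (simp add: abs_divide)
      also have "\<dots> \<le> B / \<epsilon>" using bd[OF f(1), of t] ep by (simp add: divide_right_mono)
      finally have r: "\<bar>f t / \<epsilon>\<bar> \<le> B / \<epsilon>" .
      have cb: "B/\<epsilon> \<le> of_int (ceiling (B/\<epsilon>))" by (rule le_of_int_ceiling)
      have r1: "- (B/\<epsilon>) \<le> f t/\<epsilon>" "f t/\<epsilon> \<le> B/\<epsilon>" using r by (simp_all only: abs_le_iff, linarith+)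
      have "real_of_int (round (f t / \<epsilon>)) \<le> real_of_int N" "real_of_int (- N) \<le> real_of_int (round (f t / \<epsilon>))"
        using of_int_round_le[of "f t / \<epsilon>"] of_int_round_ge[of "f t / \<epsilon>"] r1 cb
        unfolding N_def of_int_add of_int_1 of_int_minus of_int_diff by linarith+
      then show ?thesis by (simp only: of_int_le_iff atLeastAtMost_iff)
    qed
    then show "p \<in> PiE T (\<lambda>_. {-N..N})" using f by (auto simp: pat_def)
  qed
  then have finP: "finite (pat ` A)" by (rule finite_subset) (simp add: finite_PiE T(1))
  define ch where "ch p = (SOME f. f \<in> A \<and> pat f = p)" for p
  have ch: "ch (pat f) \<in> A \<and> pat (ch (pat f)) = pat f" if "f \<in> A" for f
    unfolding ch_def by (rule someI_ex) (use that in blast)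
  show "\<exists>K. finite K \<and> K \<subseteq> A \<and> A \<subseteq> (\<Union>x\<in>K. Met_TC.mball x e)"
  proof (intro exI conjI)
    show "finite (ch ` pat ` A)" using finP by simp
    show "ch ` pat ` A \<subseteq> A" using ch by blast
    show "A \<subseteq> (\<Union>x\<in>ch ` pat ` A. Met_TC.mball x e)"
    proof
      fix f assume f: "f \<in> A"
      define g where "g = ch (pat f)"
      have g: "g \<in> A" "pat g = pat f" using ch[OF f] by (auto simp: g_def)
      have close: "\<bar>f t - g t\<bar> < \<epsilon>" if "t \<in> T" for t
      proof -
        have "round (g t / \<epsilon>) = round (f t / \<epsilon>)"
          using fun_cong[OF g(2), of t] that by (simp add: pat_def)
        then have "\<bar>f t / \<epsilon> - g t / \<epsilon>\<bar> < 1" by (metis round_eq_imp_diff_1)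
        then have "\<bar>(f t - g t) / \<epsilon>\<bar> < 1" by (simp add: diff_divide_distrib)
        then show ?thesis using ep by (simp add: abs_divide)
      qed
      have "dist g f \<le> 3 * \<epsilon>"
      proof (rule dist_bound)
        fix x
        obtain t where t: "t \<in> T" "x \<in> U t" using T(2) by blast
        have "\<bar>f x - f t\<bar> \<le> \<epsilon>" "\<bar>g x - g t\<bar> \<le> \<epsilon>" using U[of t] t f g by auto
        with close[OF t(1)] show "dist (g x) (f x) \<le> 3 * \<epsilon>" by (simp add: dist_real_def)
      qed
      then have "dist g f < e" using ep by (simp add: \<epsilon>_def)
      then show "f \<in> (\<Union>x\<in>ch ` pat ` A. Met_TC.mball x e)"
        by (auto simp: g_def intro!: bexI[of _ "pat f"] f)
    qed
  qed
qed


theorem lemma2p12: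
  fixes c :: "'a::topological_space \<Rightarrow> 'b::topological_space \<Rightarrow> real"
    and x0 :: 'a
    and \<mu> :: "real \<Rightarrow> 'a measure"
    and \<nu> :: "real \<Rightarrow> 'b measure"
  assumes "compact (UNIV :: 'a set)"
    and "compact (UNIV :: 'b set)"
    and "continuous_on UNIV (\<lambda>p. c (fst p) (snd p))"
    and "\<And>k. k > 0 \<Longrightarrow> prob_space (\<mu> k) \<and> sets (\<mu> k) = sets (borel :: 'a measure)"
    and "\<And>k. k > 0 \<Longrightarrow> prob_space (\<nu> k) \<and> sets (\<nu> k) = sets (borel :: 'b measure)"
  shows "compact (closure {w :: 'a \<Rightarrow>\<^sub>C real. \<exists>k > 0. \<exists>u :: 'a \<Rightarrow> real. continuous_on UNIV u \<and>
            (\<forall>x. apply_bcontfun w x = S_k k c (\<mu> k) (\<nu> k) u x - S_k k c (\<mu> k) (\<nu> k) u x0)})"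
proof -
  define A where "A = {w :: 'a \<Rightarrow>\<^sub>C real. \<exists>k > 0. \<exists>u :: 'a \<Rightarrow> real. continuous_on UNIV u \<and>
            (\<forall>x. apply_bcontfun w x = S_k k c (\<mu> k) (\<nu> k) u x - S_k k c (\<mu> k) (\<nu> k) u x0)}"
  have "compact ((\<lambda>p. c (fst p) (snd p)) ` (UNIV \<times> UNIV))"
    by (intro compact_continuous_image compact_Times assms(1,2)) (use assms(3) in simp)
  then have "bounded ((\<lambda>p. c (fst p) (snd p)) ` (UNIV \<times> UNIV))" by (rule compact_imp_bounded)
  then obtain M where M: "\<And>x y. \<bar>c x y\<bar> \<le> M" unfolding bounded_iff by force
  have cx: "continuous_on UNIV (c x)" for x
  proof -
    have "continuous_on UNIV (\<lambda>y. (\<lambda>p. c (fst p) (snd p)) (x, y))"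
      by (intro continuous_on_compose2[OF assms(3)] continuous_intros) auto
    then show ?thesis by simp
  qed
  have Sdiff: "\<bar>S_k k c (\<mu> k) (\<nu> k) u x - S_k k c (\<mu> k) (\<nu> k) u x'\<bar> \<le> \<epsilon>"
    if k: "k > 0" and cl: "\<And>y. \<bar>c x y - c x' y\<bar> \<le> \<epsilon>" for k u x x' \<epsilon>
  proof -
    have P: "prob_space (\<nu> k)" and se: "sets (\<nu> k) = sets (borel :: 'b measure)" using assms(5)[OF k] by auto
    have cl': "\<And>y. \<bar>c x' y - c x y\<bar> \<le> \<epsilon>" using cl by (simp add: abs_minus_commute)
    show ?thesis unfolding S_k_def
      using key[OF k P se cx cl, of "v_k k c (\<mu> k) u"] key[OF k P se cx cl', of "v_k k c (\<mu> k) u"]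
      by linarith
  qed
  have bd: "\<bar>f x\<bar> \<le> 2 * M" if fA: "f \<in> A" for f x
  proof -
    obtain k u where k: "k > 0" and f: "\<forall>x. f x = S_k k c (\<mu> k) (\<nu> k) u x - S_k k c (\<mu> k) (\<nu> k) u x0"
      using fA unfolding A_def by blast
    have "\<bar>c x y - c x0 y\<bar> \<le> 2 * M" for y using M[of x y] M[of x0 y] by linarith
    from Sdiff[OF k this] f show ?thesis by simp
  qed
  have equi: "\<exists>U. open U \<and> x \<in> U \<and> (\<forall>f\<in>A. \<forall>x'\<in>U. \<bar>f x' - f x\<bar> \<le> \<epsilon>)" if e: "\<epsilon> > 0" for x \<epsilon>
  proof -
    obtain U where U: "open U" "x \<in> U" "\<forall>x'\<in>U. \<forall>y. \<bar>c x' y - c x y\<bar> \<le> \<epsilon>"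
      using tube[OF assms(2,3) e] by blast
    show ?thesis
    proof (intro exI conjI ballI)
      fix f x' assume fA: "f \<in> A" and x': "x' \<in> U"
      obtain k u where k: "k > 0" and f: "\<forall>x. f x = S_k k c (\<mu> k) (\<nu> k) u x - S_k k c (\<mu> k) (\<nu> k) u x0"
        using fA unfolding A_def by blast
      from Sdiff[OF k, of x' x \<epsilon> u] U(3) x' f show "\<bar>f x' - f x\<bar> \<le> \<epsilon>" by simp
    qed (use U in auto)
  qed
  have "Met_TC.mtotally_bounded A" by (rule tb[OF assms(1) bd equi])
  then have "compactin Met_TC.mtopology (Met_TC.mtopology closure_of A)"
    using Met_TC.mtotally_bounded_eq_compact_closure_of[OF bcf_mcomplete] by blast
  then show ?thesis unfolding A_def[symmetric] by simp
qed

end
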